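(* Let $\mathbb{K}$ be a field of characteristic zero and let $\mathbb{K}(x)[S_x]$ be the ring of linear recurrence operators, in which $S_x\, a(x) = a(x+1)\, S_x$ for $a\in\mathbb{K}(x)$. Let $m$ be a positive integer and let $L\in\mathbb{K}(x)[S_x]$ be nonzero, with $m$-exponent separation $L=L_0+L_1+\cdots+L_{m-1}$, where $L_i=\sum_{j=0}^{r_i}\ell_{i,j}S_x^{jm+i}$ with $\ell_{i,j}\in\mathbb{K}(x)$. Let $\mathcal{L}_m$ be the $m\times m$ matrix over $\mathbb{K}(x)[S_x]$ whose entry in row $i$ and column $j$ ($0\le i,j\le m-1$) is $L_{(i-j)\bmod m}$. Then there exist a matrix $\mathcal{M}\in\mathbb{K}(x)[S_x]^{m\times m}$ and nonzero operators $T_0,\ldots,T_{m-1}\in\mathbb{K}(x)[S_x]$ such that $\mathcal{M}\cdot\mathcal{L}_m=\mathrm{diag}(T_0,T_1,\ldots,T_{m-1})$.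
   Context: Matrix products are computed in the noncommutative ring $\mathbb{K}(x)[S_x]$: the $(i,j)$ entry of $\mathcal{M}\cdot\mathcal{L}_m$ is $\sum_k \mathcal{M}_{i,k}(\mathcal{L}_m)_{k,j}$. *)

theory Defs
  imports "HOL-Computational_Algebra.Polynomial" "HOL-Computational_Algebra.Fraction_Field"
begin

text \<open>The rational function field K(x) is modelled as 'a poly fract.
  The shift automorphism a(x) to a(x+1), defined on representatives.\<close>
definition ratshift :: "'a::field_char_0 poly fract \<Rightarrow> 'a poly fract" where
  "ratshift r = (SOME s. \<forall>a b. b \<noteq> 0 \<longrightarrow> r = Fract a b \<longrightarrow>
      s = Fract (pcompose a [:1, 1:]) (pcompose b [:1, 1:]))"

text \<open>Recurrence operators K(x)[S_x] are represented as polynomials in S_x with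
  coefficients (on the left) in K(x): the operator sum_k c_k S_x^k is the poly with
  coeff k = c_k.  Addition is polynomial addition; multiplication is the Ore product
  determined by S_x a(x) = a(x+1) S_x.\<close>
type_synonym 'a recop = "'a poly fract poly"

definition ore_mult :: "'a::field_char_0 recop \<Rightarrow> 'a recop \<Rightarrow> 'a recop" where
  "ore_mult P Q = (\<Sum>i\<le>degree P. \<Sum>j\<le>degree Q.
      monom (coeff P i * (ratshift ^^ i) (coeff Q j)) (i + j))"

definition exp_part :: "nat \<Rightarrow> nat \<Rightarrow> 'a::field_char_0 recop \<Rightarrow> 'a recop" where
  "exp_part m i L = (\<Sum>k\<le>degree L. if k mod m = i then monom (coeff L k) k else 0)"

definition sep_matrix :: "nat \<Rightarrow> 'a::field_char_0 recop \<Rightarrow> nat \<Rightarrow> nat \<Rightarrow> 'a recop" where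
  "sep_matrix m L i j = exp_part m (nat ((int i - int j) mod int m)) L"

end

theory Submission
  imports Defs
begin

lemma ratshift_Fract:
  fixes a b :: "'a::field_char_0 poly"
  assumes b: "b \<noteq> 0"
  shows "ratshift (Fract a b) = Fract (pcompose a [:1, 1:]) (pcompose b [:1, 1:])"
proof -
  let ?q = "[:1, 1:] :: 'a poly"
  have dq: "degree ?q > 0" by simp
  let ?P = "\<lambda>s. \<forall>c d. d \<noteq> 0 \<longrightarrow> Fract a b = Fract c d \<longrightarrow>
      s = Fract (pcompose c ?q) (pcompose d ?q)"
  have "?P (Fract (pcompose a ?q) (pcompose b ?q))"
  proof (intro allI impI)
    fix c d :: "'a poly" assume d: "d \<noteq> 0" and e: "Fract a b = Fract c d"
    have "a * d = c * b" using e eq_fract(1)[OF b d] by simp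
    hence "pcompose (a * d) ?q = pcompose (c * b) ?q" by simp
    hence "pcompose a ?q * pcompose d ?q = pcompose c ?q * pcompose b ?q"
      by (simp add: pcompose_mult)
    moreover have "pcompose b ?q \<noteq> 0" "pcompose d ?q \<noteq> 0"
      using b d pcompose_eq_0_iff[OF dq] by auto
    ultimately show "Fract (pcompose a ?q) (pcompose b ?q) = Fract (pcompose c ?q) (pcompose d ?q)"
      by (simp add: eq_fract(1))
  qed
  hence "?P (ratshift (Fract a b))" unfolding ratshift_def by (rule someI)
  thus ?thesis using b by blast
qed

lemma Fract_zero_iff:
  fixes a b :: "'a::idom"
  assumes "b \<noteq> 0" shows "Fract a b = 0 \<longleftrightarrow> a = 0"
  using eq_fract(1)[OF assms one_neq_zero, of a 0] by (simp add: Zero_fract_def)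

lemma ratshift_zero_iff: "ratshift (x :: 'a::field_char_0 poly fract) = 0 \<longleftrightarrow> x = 0"
proof (cases x)
  case (Fract a b)
  have dq: "degree ([:1, 1:] :: 'a poly) > 0" by simp
  have "pcompose b [:1, 1:] \<noteq> 0" using Fract pcompose_eq_0_iff[OF dq] by auto
  thus ?thesis using Fract ratshift_Fract Fract_zero_iff pcompose_eq_0_iff[OF dq] by metis
qed

lemma ratshift_pow_zero_iff: "(ratshift ^^ n) (x :: 'a::field_char_0 poly fract) = 0 \<longleftrightarrow> x = 0"
  by (induction n) (auto simp: ratshift_zero_iff)

lemma lin_solve:
  fixes A :: "'e \<Rightarrow> 'v \<Rightarrow> 'f::field"
  assumes "finite E" "finite V" "card E < card V"
  shows "\<exists>x. (\<exists>v\<in>V. x v \<noteq> 0) \<and> (\<forall>e\<in>E. (\<Sum>v\<in>V. A e v * x v) = 0)"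
  using assms
proof (induction E arbitrary: V A rule: finite_induct)
  case empty
  then obtain v where "v \<in> V" by fastforce
  thus ?case by (intro exI[of _ "\<lambda>_. 1"]) auto
next
  case (insert e E)
  show ?case
  proof (cases "\<forall>v\<in>V. A e v = 0")
    case True
    from insert.IH[of V A] insert.prems insert.hyps obtain x where
      "(\<exists>v\<in>V. x v \<noteq> 0)" "\<forall>e\<in>E. (\<Sum>v\<in>V. A e v * x v) = 0" by auto
    thus ?thesis using True by auto
  next
    case False
    then obtain v0 where v0: "v0 \<in> V" "A e v0 \<noteq> 0" by auto
    define V' where "V' = V - {v0}"
    define A' where "A' = (\<lambda>e' v. A e' v - A e' v0 * A e v / A e v0)"
    have cV: "card E < card V'" using insert.prems insert.hyps v0 by (simp add: V'_def)
    from insert.IH[of V' A'] cV insert.prems obtain x' where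
      x': "\<exists>v\<in>V'. x' v \<noteq> 0" "\<forall>e\<in>E. (\<Sum>v\<in>V'. A' e v * x' v) = 0"
      by (auto simp: V'_def)
    define x where "x = (\<lambda>v. if v = v0 then - (\<Sum>v\<in>V'. A e v * x' v) / A e v0 else x' v)"
    have split: "(\<Sum>v\<in>V. f v) = f v0 + (\<Sum>v\<in>V'. f v)" for f :: "'v \<Rightarrow> 'f"
      using v0 insert.prems unfolding V'_def by (simp add: sum.remove)
    have xV': "\<And>v. v \<in> V' \<Longrightarrow> x v = x' v" by (auto simp: x_def V'_def)
    have sV': "(\<Sum>v\<in>V'. B v * x v) = (\<Sum>v\<in>V'. B v * x' v)" for B
      by (rule sum.cong) (auto simp: xV')
    have xv0: "x v0 = - (\<Sum>v\<in>V'. A e v * x' v) / A e v0" by (simp add: x_def)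
    have eq1: "(\<Sum>v\<in>V. A e v * x v) = 0"
      unfolding split sV' xv0 using v0 by simp
    have eq2: "(\<Sum>v\<in>V. A e' v * x v) = 0" if "e' \<in> E" for e'
    proof -
      have "(\<Sum>v\<in>V. A e' v * x v) = A e' v0 * x v0 + (\<Sum>v\<in>V'. A e' v * x' v)"
        unfolding split sV' ..
      also have "\<dots> = (\<Sum>v\<in>V'. A' e' v * x' v)"
        using v0 by (simp add: xv0 A'_def algebra_simps sum_subtractf sum_divide_distrib
            sum_distrib_left)
      finally show ?thesis using x' that by simp
    qed
    have "\<exists>v\<in>V. x v \<noteq> 0"
    proof -
      from x'(1) obtain v where "v \<in> V'" "x' v \<noteq> 0" by blast
      moreover have "v \<in> V" using \<open>v \<in> V'\<close> by (simp add: V'_def)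
      ultimately show ?thesis using xV'[of v] by force
    qed
    thus ?thesis using eq1 eq2 by auto
  qed
qed

lemma ratshift_pow_0 [simp]: "(ratshift ^^ n) (0 :: 'a::field_char_0 poly fract) = 0"
  by (simp add: ratshift_pow_zero_iff)

lemma coeff_ore_mult:
  "coeff (ore_mult P Q) n = (\<Sum>a\<le>n. coeff P a * (ratshift ^^ a) (coeff Q (n - a)))"
proof -
  define f where "f = (\<lambda>a. coeff P a * (ratshift ^^ a) (coeff Q (n - a)))"
  have inner: "(\<Sum>j\<le>degree Q. if i + j = n then coeff P i * (ratshift ^^ i) (coeff Q j) else 0)
      = (if i \<le> n then f i else 0)" for i
  proof (cases "i \<le> n \<and> n - i \<le> degree Q")
    case True
    have "(\<Sum>j\<le>degree Q. if i + j = n then coeff P i * (ratshift ^^ i) (coeff Q j) else 0)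
       = (\<Sum>j\<le>degree Q. if j = n - i then coeff P i * (ratshift ^^ i) (coeff Q j) else 0)"
      by (rule sum.cong) (use True in auto)
    also have "\<dots> = f i" using True by (simp add: f_def)
    finally show ?thesis using True by simp
  next
    case False
    have "(\<Sum>j\<le>degree Q. if i + j = n then coeff P i * (ratshift ^^ i) (coeff Q j) else 0) = 0"
      by (rule sum.neutral) (use False in auto)
    moreover have "(if i \<le> n then f i else 0) = 0"
      using False by (auto simp: f_def coeff_eq_0)
    ultimately show ?thesis by simp
  qed
  have "coeff (ore_mult P Q) n = (\<Sum>i\<le>degree P. if i \<le> n then f i else 0)"
    unfolding ore_mult_def coeff_sum coeff_monom inner by simp
  also have "\<dots> = (\<Sum>i\<le>max (degree P) n. if i \<le> n then f i else 0)"
    by (rule sum.mono_neutral_left) (auto simp: f_def coeff_eq_0)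
  also have "\<dots> = (\<Sum>i\<le>n. f i)"
    by (rule sum.mono_neutral_cong_right) (auto simp: f_def coeff_eq_0)
  finally show ?thesis by (simp add: f_def)
qed

lemma coeff_exp_part: "coeff (exp_part m r X) k = (if k mod m = r then coeff X k else 0)"
proof -
  have "coeff (exp_part m r X) k = (\<Sum>j\<le>degree X. if j = k then (if k mod m = r then coeff X k else 0) else 0)"
    unfolding exp_part_def coeff_sum by (rule sum.cong) (auto simp: coeff_monom)
  also have "\<dots> = (if k mod m = r then coeff X k else 0)"
    by (auto simp: coeff_eq_0)
  finally show ?thesis .
qed

lemma nat_mod_eq_iff:
  assumes "m > 0"
  shows "(a mod m = nat (z mod int m)) \<longleftrightarrow> (int m dvd int a - z)"
proof -
  have "a mod m = nat (z mod int m) \<longleftrightarrow> int (a mod m) = z mod int m"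
    using assms by (metis nat_int pos_mod_sign of_nat_0_less_iff int_nat_eq)
  also have "\<dots> \<longleftrightarrow> int a mod int m = z mod int m" by (simp add: of_nat_mod)
  also have "\<dots> \<longleftrightarrow> int m dvd int a - z" by (rule mod_eq_dvd_iff)
  finally show ?thesis .
qed

lemma key_cond:
  assumes "m > 0" "k < m" "a \<le> n"
  shows "(a mod m = nat ((int i - int k) mod int m) \<and> (n - a) mod m = nat ((int k - int j) mod int m))
     \<longleftrightarrow> (k = nat ((int i - int a) mod int m) \<and> int n mod int m = (int i - int j) mod int m)"
proof -
  have e1: "a mod m = nat ((int i - int k) mod int m) \<longleftrightarrow> int m dvd int k - (int i - int a)"
    using nat_mod_eq_iff[OF assms(1)] by (smt (verit))
  have e2: "(n - a) mod m = nat ((int k - int j) mod int m) \<longleftrightarrow> int m dvd (int n - int a) - (int k - int j)"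
    using nat_mod_eq_iff[OF assms(1), of "n - a"] assms(3) by (simp add: of_nat_diff)
  have e3: "k = nat ((int i - int a) mod int m) \<longleftrightarrow> int m dvd int k - (int i - int a)"
  proof -
    have "k mod m = k" using assms by simp
    thus ?thesis using nat_mod_eq_iff[OF assms(1), of k "int i - int a"] by simp
  qed
  have e4: "int n mod int m = (int i - int j) mod int m \<longleftrightarrow> int m dvd int n - (int i - int j)"
    by (rule mod_eq_dvd_iff)
  have id: "(int n - int a) - (int k - int j) = (int n - (int i - int j)) - (int k - (int i - int a))"
    by simp
  show ?thesis unfolding e1 e2 e3 e4 id
    using dvd_diff dvd_add by (metis diff_add_cancel)
qed

lemma entry_coeff:
  fixes P L :: "'a::field_char_0 recop"
  assumes m: "m > 0"
  shows "coeff (\<Sum>k<m. ore_mult (exp_part m (nat ((int i - int k) mod int m)) P) (sep_matrix m L k j)) n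
    = (if int n mod int m = (int i - int j) mod int m then coeff (ore_mult P L) n else 0)"
proof -
  define B where "B = (int n mod int m = (int i - int j) mod int m)"
  define g where "g = (\<lambda>a. coeff P a * (ratshift ^^ a) (coeff L (n - a)))"
  have "coeff (\<Sum>k<m. ore_mult (exp_part m (nat ((int i - int k) mod int m)) P) (sep_matrix m L k j)) n
     = (\<Sum>k<m. \<Sum>a\<le>n. if k = nat ((int i - int a) mod int m) \<and> B then g a else 0)"
    unfolding coeff_sum
  proof (rule sum.cong[OF refl])
    fix k assume k: "k \<in> {..<m}"
    show "coeff (ore_mult (exp_part m (nat ((int i - int k) mod int m)) P) (sep_matrix m L k j)) n
      = (\<Sum>a\<le>n. if k = nat ((int i - int a) mod int m) \<and> B then g a else 0)"
      unfolding coeff_ore_mult sep_matrix_def coeff_exp_part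
    proof (rule sum.cong[OF refl])
      fix a assume a: "a \<in> {..n}"
      have "(if a mod m = nat ((int i - int k) mod int m) then coeff P a else 0) *
          (ratshift ^^ a) (if (n - a) mod m = nat ((int k - int j) mod int m) then coeff L (n - a) else 0)
        = (if a mod m = nat ((int i - int k) mod int m) \<and> (n - a) mod m = nat ((int k - int j) mod int m)
           then g a else 0)" by (simp add: g_def)
      also have "\<dots> = (if k = nat ((int i - int a) mod int m) \<and> B then g a else 0)"
        using key_cond[OF m, of k a n i j] k a by (simp add: B_def)
      finally show "(if a mod m = nat ((int i - int k) mod int m) then coeff P a else 0) *
          (ratshift ^^ a) (if (n - a) mod m = nat ((int k - int j) mod int m) then coeff L (n - a) else 0)
        = (if k = nat ((int i - int a) mod int m) \<and> B then g a else 0)" .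
    qed
  qed
  also have "\<dots> = (\<Sum>a\<le>n. \<Sum>k<m. if k = nat ((int i - int a) mod int m) \<and> B then g a else 0)"
    by (rule sum.swap)
  also have "\<dots> = (\<Sum>a\<le>n. if B then g a else 0)"
  proof (rule sum.cong[OF refl])
    fix a
    have lt: "nat ((int i - int a) mod int m) < m" using m by (simp add: nat_less_iff)
    show "(\<Sum>k<m. if k = nat ((int i - int a) mod int m) \<and> B then g a else 0) = (if B then g a else 0)"
      using lt by (cases B) (simp_all add: sum.delta)
  qed
  also have "\<dots> = (if B then coeff (ore_mult P L) n else 0)"
    by (simp add: coeff_ore_mult g_def)
  finally show ?thesis by (simp add: B_def)
qed

lemma ore_mult_nonzero:
  fixes P L :: "'a::field_char_0 recop"
  assumes "P \<noteq> 0" "L \<noteq> 0"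
  shows "ore_mult P L \<noteq> 0"
proof -
  let ?p = "degree P" and ?d = "degree L"
  let ?t = "\<lambda>a. coeff P a * (ratshift ^^ a) (coeff L (?p + ?d - a))"
  have "coeff (ore_mult P L) (?p + ?d) = (\<Sum>a\<le>?p + ?d. ?t a)" by (rule coeff_ore_mult)
  also have "\<dots> = ?t ?p + (\<Sum>a\<in>{..?p + ?d} - {?p}. ?t a)"
    by (rule sum.remove) auto
  also have "(\<Sum>a\<in>{..?p + ?d} - {?p}. ?t a) = 0"
  proof (rule sum.neutral, intro ballI)
    fix a assume a: "a \<in> {..?p + ?d} - {?p}"
    show "?t a = 0"
    proof (cases "a < ?p")
      case True
      hence "coeff L (?p + ?d - a) = 0" by (intro coeff_eq_0) simp
      thus ?thesis by simp
    next
      case False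
      hence "coeff P a = 0" using a by (intro coeff_eq_0) auto
      thus ?thesis by simp
    qed
  qed
  finally have "coeff (ore_mult P L) (?p + ?d) = ?t ?p" by simp
  moreover have "?t ?p \<noteq> 0" using assms by (simp add: ratshift_pow_zero_iff)
  ultimately show ?thesis by force
qed

lemma exists_P:
  fixes L :: "'a::field_char_0 recop"
  assumes m: "m > 0" and L: "L \<noteq> 0"
  shows "\<exists>P. ore_mult P L \<noteq> 0 \<and> (\<forall>n. n mod m \<noteq> 0 \<longrightarrow> coeff (ore_mult P L) n = 0)"
proof -
  define d where "d = degree L"
  define N where "N = m * d - d"
  have Nd: "N + d = m * d" using m by (simp add: N_def)
  define V where "V = {..N}"
  define E where "E = {n. n \<le> N + d \<and> n mod m \<noteq> 0}"
  define A where "A = (\<lambda>n a. if a \<le> n then (ratshift ^^ a) (coeff L (n - a)) else 0)"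
  define img where "img = (\<lambda>q. m * q) ` {..d}"
  have sub: "E \<subseteq> {..N + d} - img"
    by (auto simp: E_def img_def)
  have img_sub: "img \<subseteq> {..N + d}" using Nd by (auto simp: img_def)
  have cimg: "card img = d + 1"
    unfolding img_def using m by (subst card_image) (auto simp: inj_on_def)
  have "card E \<le> card ({..N + d} - img)" by (rule card_mono[OF _ sub]) simp
  also have "\<dots> = N" using img_sub cimg by (simp add: card_Diff_subset finite_subset)
  finally have cE: "card E < card V" by (simp add: V_def)
  have fE: "finite E" by (auto simp: E_def)
  obtain x where x: "\<exists>v\<in>V. x v \<noteq> 0" "\<forall>e\<in>E. (\<Sum>v\<in>V. A e v * x v) = 0"
    using lin_solve[OF fE _ cE, of A] by (auto simp: V_def)
  define P where "P = (\<Sum>a\<le>N. monom (x a) a)"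
  have cP: "coeff P k = (if k \<le> N then x k else 0)" for k
    unfolding P_def coeff_sum coeff_monom by (simp add: sum.delta)
  have P0: "P \<noteq> 0"
  proof
    assume "P = 0"
    from x(1) obtain v where "v \<in> V" "x v \<noteq> 0" by blast
    hence "coeff P v \<noteq> 0" using cP[of v] by (simp add: V_def)
    with \<open>P = 0\<close> show False by simp
  qed
  have "\<forall>n. n mod m \<noteq> 0 \<longrightarrow> coeff (ore_mult P L) n = 0"
  proof (intro allI impI)
    fix n assume n: "n mod m \<noteq> 0"
    show "coeff (ore_mult P L) n = 0"
    proof (cases "n \<le> N + d")
      case True
      hence nE: "n \<in> E" using n by (simp add: E_def)
      have "coeff (ore_mult P L) n = (\<Sum>a\<le>n. (if a \<in> {..N} then x a else 0) * (ratshift ^^ a) (coeff L (n - a)))"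
        by (simp add: coeff_ore_mult cP)
      also have "\<dots> = (\<Sum>a\<le>n. if a \<in> {..N} then x a * (ratshift ^^ a) (coeff L (n - a)) else 0)"
        by (rule sum.cong) auto
      also have "\<dots> = (\<Sum>a\<in>{..n} \<inter> {..N}. x a * (ratshift ^^ a) (coeff L (n - a)))"
        by (rule sum.inter_restrict[symmetric]) simp
      also have "\<dots> = (\<Sum>a\<le>N. if a \<in> {..n} then x a * (ratshift ^^ a) (coeff L (n - a)) else 0)"
        unfolding Int_commute[of "{..n}"] by (rule sum.inter_restrict) simp
      also have "\<dots> = (\<Sum>v\<in>V. A n v * x v)"
        by (rule sum.cong) (auto simp: V_def A_def)
      also have "\<dots> = 0" using x(2) nE by blast
      finally show ?thesis .
    next
      case False
      show ?thesis unfolding coeff_ore_mult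
      proof (rule sum.neutral, intro ballI)
        fix a assume a: "a \<in> {..n}"
        show "coeff P a * (ratshift ^^ a) (coeff L (n - a)) = 0"
        proof (cases "a \<le> N")
          case True
          hence "coeff L (n - a) = 0" using False by (intro coeff_eq_0) (simp add: d_def)
          thus ?thesis by simp
        next
          case False
          thus ?thesis by (simp add: cP)
        qed
      qed
    qed
  qed
  thus ?thesis using ore_mult_nonzero[OF P0 L] by blast
qed

theorem proposition4p3:
  fixes L :: "'a::field_char_0 recop" and m :: nat
  assumes "m > 0" and "L \<noteq> 0"
  shows "\<exists>(M :: nat \<Rightarrow> nat \<Rightarrow> 'a recop) (T :: nat \<Rightarrow> 'a recop).
           (\<forall>i<m. T i \<noteq> 0) \<and>
           (\<forall>i<m. \<forall>j<m. (\<Sum>k<m. ore_mult (M i k) (sep_matrix m L k j))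
                          = (if i = j then T i else 0))"
proof -
  obtain P where P: "ore_mult P L \<noteq> 0" "\<forall>n. n mod m \<noteq> 0 \<longrightarrow> coeff (ore_mult P L) n = 0"
    using exists_P[OF assms] by blast
  define M where "M = (\<lambda>i k. exp_part m (nat ((int i - int k) mod int m)) P)"
  have "\<forall>i<m. \<forall>j<m. (\<Sum>k<m. ore_mult (M i k) (sep_matrix m L k j))
                          = (if i = j then ore_mult P L else 0)"
  proof (intro allI impI)
    fix i j assume i: "i < m" and j: "j < m"
    show "(\<Sum>k<m. ore_mult (M i k) (sep_matrix m L k j)) = (if i = j then ore_mult P L else 0)"
    proof (rule poly_eqI)
      fix n
      show "coeff (\<Sum>k<m. ore_mult (M i k) (sep_matrix m L k j)) n = coeff (if i = j then ore_mult P L else 0) n"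
        unfolding M_def entry_coeff[OF assms(1)]
      proof (cases "i = j")
        case True
        have "n mod m = 0 \<Longrightarrow> int n mod int m = 0"
          by (simp add: zmod_int[symmetric])
        thus "(if int n mod int m = (int i - int j) mod int m then coeff (ore_mult P L) n else 0) =
          coeff (if i = j then ore_mult P L else 0) n"
        proof (cases "int n mod int m = 0")
          case True2: True
          thus ?thesis using True by simp
        next
          case False2: False
          hence "n mod m \<noteq> 0" using \<open>n mod m = 0 \<Longrightarrow> int n mod int m = 0\<close> by blast
          hence "coeff (ore_mult P L) n = 0" using P(2) by blast
          thus ?thesis using True by simp
        qed
      next
        case False
        have ij: "(int i - int j) mod int m \<noteq> 0"
        proof
          assume "(int i - int j) mod int m = 0"
          hence "int m dvd int i - int j" by (simp add: mod_eq_0_iff_dvd)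
          then obtain q where q: "int i - int j = int m * q" by (elim dvdE)
          have "q = 0"
          proof (rule ccontr)
            assume "q \<noteq> 0"
            hence "\<bar>q\<bar> \<ge> 1" by linarith
            hence "int m * 1 \<le> int m * \<bar>q\<bar>" by (intro mult_left_mono) simp_all
            hence "\<bar>int m * q\<bar> \<ge> int m" by (simp add: abs_mult)
            moreover have "\<bar>int i - int j\<bar> < int m" using i j by linarith
            ultimately show False using q by linarith
          qed
          thus False using q False by simp
        qed
        have nm: "n mod m = 0 \<Longrightarrow> int n mod int m = 0"
          by (simp add: zmod_int[symmetric])
        show "(if int n mod int m = (int i - int j) mod int m then coeff (ore_mult P L) n else 0) =
          coeff (if i = j then ore_mult P L else 0) n"
        proof (cases "int n mod int m = (int i - int j) mod int m")
          case T2: True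
          hence "int n mod int m \<noteq> 0" using ij by simp
          hence "n mod m \<noteq> 0" using nm by blast
          hence "coeff (ore_mult P L) n = 0" using P(2) by blast
          thus ?thesis by (simp only: if_P[OF T2] if_not_P[OF False] coeff_0)
        next
          case F2: False
          show ?thesis by (simp only: if_not_P[OF F2] if_not_P[OF False] coeff_0)
        qed
      qed
    qed
  qed
  hence "(\<forall>i<m. (\<lambda>_. ore_mult P L) i \<noteq> 0) \<and>
           (\<forall>i<m. \<forall>j<m. (\<Sum>k<m. ore_mult (M i k) (sep_matrix m L k j))
                          = (if i = j then (\<lambda>_. ore_mult P L) i else 0))" using P(1) by simp
  thus ?thesis by (intro exI[of _ M] exI[of _ "\<lambda>_. ore_mult P L"])
qed

end
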